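(* In the setting of the context, suppose $G_{xy}^{[1]}=1$ and $G_x\cong\mathrm{Frob}(20)\times C_4$. Then $G_e\cong C_4\wr C_2$.
   Context: $\mathcal{A}=(G_x,G_e,G_{xy})$ is a finite, primitive amalgam of degree $(5,2)$ (no nontrivial subgroup of $G_{xy}$ normal in both $G_x$ and $G_e$; $|G_x:G_{xy}|=5$, $|G_e:G_{xy}|=2$), $G=G_x*_{G_{xy}}G_e$ acts on the coset graph (5-valent tree) $\Gamma$, $x$ is the vertex with stabiliser $G_x$, $y$ the neighbour with $G_e$ the setwise stabiliser of $\{x,y\}$ and $G_x\cap G_y=G_{xy}$. $G_z^{[1]}$ is the pointwise stabiliser of $z$ and its neighbours, $G_{xy}^{[1]}=G_x^{[1]}\cap G_y^{[1]}$. $\mathrm{Frob}(20)$ is the Frobenius group of order 20. *)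

theory Defs
  imports "HOL-Algebra.Algebra"
begin

abbreviation C4 :: "int monoid" where
  "C4 \<equiv> integer_mod_group 4"

text \<open>The Frobenius group of order 20, realised as the affine group AGL(1,5):
  the pair (a,b) with a in {1..4}, b in {0..4} stands for the map z \<mapsto> a z + b
  over the field with 5 elements; the product is composition.\<close>
definition Frob20 :: "(int \<times> int) monoid" where
  "Frob20 = \<lparr> carrier = {(a, b). a \<in> {1..4} \<and> b \<in> {0..4}},
              monoid.mult = (\<lambda>(a, b) (c, d). ((a * c) mod 5, (a * d + b) mod 5)),
              one = (1, 0) \<rparr>"

text \<open>The wreath product C4 wr C2 = (C4 \<times> C4) \<rtimes> C2, where the generator of C2
  swaps the two coordinates: ((f,s)(g,t) = (f + s.g, s + t)).\<close>
definition C4_wr_C2 :: "((int \<times> int) \<times> int) monoid" where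
  "C4_wr_C2 = \<lparr> carrier = {((a, b), s). a \<in> {0..3} \<and> b \<in> {0..3} \<and> s \<in> {0..1}},
     monoid.mult = (\<lambda>((a, b), s) ((c, d), t).
               ((if s = 0 then ((a + c) mod 4, (b + d) mod 4)
                          else ((a + d) mod 4, (b + c) mod 4)), (s + t) mod 2)),
     one = ((0, 0), 0) \<rparr>"

text \<open>For H = G_xy and K = G_x this is G_x^{[1]}, the kernel of the
  action of G_x on the neighbours of x (which correspond to the cosets of G_xy in G_x).\<close>
definition core_in :: "('a, 'b) monoid_scheme \<Rightarrow> 'a set \<Rightarrow> 'a set \<Rightarrow> 'a set" where
  "core_in U K H = (\<Inter>g\<in>K. (g <#\<^bsub>U\<^esub> H) #>\<^bsub>U\<^esub> inv\<^bsub>U\<^esub> g)"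

end

theory Submission
  imports Defs
begin

lemma F_carrier: "carrier Frob20 = {(a, b). a \<in> {1..4} \<and> b \<in> {0..4}}"
  by (simp add: Frob20_def)
lemma F_mult: "(a,b) \<otimes>\<^bsub>Frob20\<^esub> (c,d) = ((a * c) mod 5, (a * d + b) mod 5)"
  by (simp add: Frob20_def)
lemma F_one: "\<one>\<^bsub>Frob20\<^esub> = (1,0)"
  by (simp add: Frob20_def)

lemma int4_cases: "(a::int) \<in> {1..4} \<Longrightarrow> a = 1 \<or> a = 2 \<or> a = 3 \<or> a = 4" by auto
lemma int5_cases: "(a::int) \<in> {0..4} \<Longrightarrow> a = 0 \<or> a = 1 \<or> a = 2 \<or> a = 3 \<or> a = 4" by auto

lemma assoc1: "((a::int) * c mod 5 * e) mod 5 = (a * (c * e mod 5)) mod 5"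
proof -
  have "((a::int) * c mod 5 * e) mod 5 = (a * c * e) mod 5" by (rule mod_mult_left_eq)
  also have "\<dots> = (a * (c * e)) mod 5" by (simp only: mult.assoc)
  also have "\<dots> = (a * (c * e mod 5)) mod 5" by (rule mod_mult_right_eq[symmetric])
  finally show ?thesis .
qed

lemma assoc2: "((a::int) * c mod 5 * f + (a * d + b) mod 5) mod 5 = (a * ((c * f + d) mod 5) + b) mod 5"
proof -
  have "((a::int) * c mod 5 * f + (a * d + b) mod 5) mod 5 = (a * c mod 5 * f + (a * d + b)) mod 5"
    by (rule mod_add_right_eq)
  also have "\<dots> = ((a * c mod 5 * f) mod 5 + (a * d + b)) mod 5" by (rule mod_add_left_eq[symmetric])
  also have "(a * c mod 5 * f) mod 5 = (a * c * f) mod 5" by (rule mod_mult_left_eq)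
  also have "((a * c * f) mod 5 + (a * d + b)) mod 5 = (a * c * f + (a * d + b)) mod 5" by (rule mod_add_left_eq)
  also have "a * c * f + (a * d + b) = a * (c * f + d) + b" by (simp add: algebra_simps)
  also have "(a * (c * f + d) + b) mod 5 = ((a * (c * f + d)) mod 5 + b) mod 5" by (rule mod_add_left_eq[symmetric])
  also have "(a * (c * f + d)) mod 5 = (a * ((c * f + d) mod 5)) mod 5" by (rule mod_mult_right_eq[symmetric])
  also have "((a * ((c * f + d) mod 5)) mod 5 + b) mod 5 = (a * ((c * f + d) mod 5) + b) mod 5" by (rule mod_add_left_eq)
  finally show ?thesis .
qed

lemma F_monoid: "monoid Frob20"
proof (rule monoidI)
  fix x y assume "x \<in> carrier Frob20" "y \<in> carrier Frob20"
  then obtain a b c d where x: "x = (a,b)" "y = (c,d)" "a \<in> {1..4}" "c \<in> {1..4}" by (auto simp: F_carrier)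
  have "(a * c) mod 5 \<in> {1..4}" using int4_cases[OF x(3)] int4_cases[OF x(4)] by auto
  then show "x \<otimes>\<^bsub>Frob20\<^esub> y \<in> carrier Frob20" using x by (simp add: F_carrier F_mult)
next
  show "\<one>\<^bsub>Frob20\<^esub> \<in> carrier Frob20" by (simp add: F_carrier F_one)
next
  fix x y z assume "x \<in> carrier Frob20" "y \<in> carrier Frob20" "z \<in> carrier Frob20"
  then show "x \<otimes>\<^bsub>Frob20\<^esub> y \<otimes>\<^bsub>Frob20\<^esub> z = x \<otimes>\<^bsub>Frob20\<^esub> (y \<otimes>\<^bsub>Frob20\<^esub> z)"
    by (auto simp only: F_carrier F_mult assoc1 assoc2 split: prod.splits)
next
  fix x assume "x \<in> carrier Frob20"
  then show "\<one>\<^bsub>Frob20\<^esub> \<otimes>\<^bsub>Frob20\<^esub> x = x" "x \<otimes>\<^bsub>Frob20\<^esub> \<one>\<^bsub>Frob20\<^esub> = x"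
    by (auto simp: F_carrier F_mult F_one)
qed

lemma P_monoid: "monoid (Frob20 \<times>\<times> C4)"
  by (rule DirProd_monoid[OF F_monoid]) (simp add: group.is_monoid)

definition S :: "(int\<times>int) set" where "S = {(a,b). a \<in> {2..4} \<and> b \<in> {0..4}} \<union> {(1,0)}"


abbreviation FC where "FC \<equiv> Frob20 \<times>\<times> C4"

lemma FC_carrier: "carrier FC = carrier Frob20 \<times> {0..3}"
  by (auto simp: carrier_integer_mod_group)

lemma FC_mult': "x \<otimes>\<^bsub>FC\<^esub> y = (fst x \<otimes>\<^bsub>Frob20\<^esub> fst y, (snd x + snd y) mod 4)"
  by (simp add: mult_DirProd')

lemma FC_pow_fst: "fst (x [^]\<^bsub>FC\<^esub> (n::nat)) = fst x [^]\<^bsub>Frob20\<^esub> n"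
  by (induct n) (auto simp: mult_DirProd' F_one)

lemma F_trans_pow: "(1::int, b::int) [^]\<^bsub>Frob20\<^esub> (n::nat) = (1, (int n * b) mod 5)"
  by (induct n) (auto simp: F_one F_mult mod_simps algebra_simps)

lemma pow16_S: assumes "k \<in> carrier Frob20" "k [^]\<^bsub>Frob20\<^esub> (16::nat) = (1,0)" shows "k \<in> S"
proof -
  obtain a b where k: "k = (a,b)" "a \<in> {1..4}" "b \<in> {0..4}" using assms(1) by (auto simp: F_carrier)
  show ?thesis
  proof (cases "a = 1")
    case True
    then have "(16 * b) mod 5 = 0" using assms(2) k by (simp add: F_trans_pow)
    then have "b = 0" using int5_cases[OF k(3)] by auto
    then show ?thesis using k True by (simp add: S_def)
  next
    case False then show ?thesis using k by (auto simp: S_def)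
  qed
qed

lemma key5: assumes "a \<in> {2..4}" "x \<in> {0..4}" "y \<in> {0..4}" "(5::int) dvd (a - 1) * x - (a - 1) * y"
  shows "x = y"
proof -
  have "a = 2 \<or> a = 3 \<or> a = 4" using assms(1) by auto
  then show ?thesis using int5_cases[OF assms(2)] int5_cases[OF assms(3)] assms(4) by auto
qed

lemma L2: assumes "(a0::int) \<in> {2..4}" "b1 \<in> {0..4}" "b2 \<in> {0..4}"
  "(a0 * b1 + b0) mod 5 = (a1 * b0 + b1) mod 5" "(a0 * b2 + b0) mod 5 = (a1 * b0 + b2) mod 5"
  shows "b1 = b2"
proof -
  have "5 dvd (a0 * b1 + b0) - (a1 * b0 + b1)" "5 dvd (a0 * b2 + b0) - (a1 * b0 + b2)"
    using assms(4,5) by (simp_all add: mod_eq_dvd_iff)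
  then have "5 dvd ((a0 * b1 + b0) - (a1 * b0 + b1)) - ((a0 * b2 + b0) - (a1 * b0 + b2))"
    by (rule dvd_diff)
  then have "5 dvd (a0 - 1) * b1 - (a0 - 1) * b2" by (simp add: algebra_simps)
  then show ?thesis using key5 assms(1-3) by blast
qed

lemma inj5: assumes "(a::int) \<in> {2..4}" "x \<in> {0..4}" "y \<in> {0..4}"
   "(b + (a - 1) * x) mod 5 = (b + (a - 1) * y) mod 5" shows "x = y"
proof -
  have "5 dvd (b + (a - 1) * x) - (b + (a - 1) * y)" using assms(4) by (simp add: mod_eq_dvd_iff)
  then have "5 dvd (a - 1) * x - (a - 1) * y" by simp
  then show ?thesis using key5 assms(1-3) by blast
qed



lemma a4: "(a::int) \<in> {1..4} \<Longrightarrow> (a * a * a * a) mod 5 = 1"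
  by (drule int4_cases) auto

lemma a3_range: "(a::int) \<in> {1..4} \<Longrightarrow> (a * a * a) mod 5 \<in> {1..4}"
  by (drule int4_cases) auto

lemma F_linv: assumes "a \<in> {1..4}"
  shows "((a * a * a) mod 5, (- (a * a * a * b)) mod 5) \<otimes>\<^bsub>Frob20\<^esub> (a, b) = \<one>\<^bsub>Frob20\<^esub>"
proof -
  have "((a * a * a) mod 5 * a) mod 5 = 1" using a4[OF assms] by (simp add: mod_mult_left_eq mult.assoc)
  moreover have "((a * a * a) mod 5 * b + (- (a * a * a * b)) mod 5) mod 5 = 0"
  proof -
    have "((a * a * a) mod 5 * b + (- (a * a * a * b)) mod 5) mod 5 = ((a * a * a) mod 5 * b + (- (a * a * a * b))) mod 5"
      by (rule mod_add_right_eq)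
    also have "\<dots> = (((a * a * a) mod 5 * b) mod 5 + (- (a * a * a * b))) mod 5" by (rule mod_add_left_eq[symmetric])
    also have "((a * a * a) mod 5 * b) mod 5 = (a * a * a * b) mod 5" by (rule mod_mult_left_eq)
    also have "((a * a * a * b) mod 5 + (- (a * a * a * b))) mod 5 = (a * a * a * b + (- (a * a * a * b))) mod 5"
      by (rule mod_add_left_eq)
    finally show ?thesis by simp
  qed
  ultimately show ?thesis by (simp add: F_mult F_one)
qed

lemma F_group: "group Frob20"
proof (rule monoid.group_l_invI[OF F_monoid])
  fix x assume "x \<in> carrier Frob20"
  then obtain a b where x: "x = (a,b)" "a \<in> {1..4}" "b \<in> {0..4}" by (auto simp: F_carrier)
  show "\<exists>y\<in>carrier Frob20. y \<otimes>\<^bsub>Frob20\<^esub> x = \<one>\<^bsub>Frob20\<^esub>"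
    by (rule bexI[of _ "((a * a * a) mod 5, (- (a * a * a * b)) mod 5)"])
       (use x F_linv a3_range in \<open>auto simp: F_carrier\<close>)
qed

lemma F_inv: assumes "(a,b) \<in> carrier Frob20"
  shows "inv\<^bsub>Frob20\<^esub> (a, b) = ((a * a * a) mod 5, (- (a * a * a * b)) mod 5)"
proof -
  have a: "a \<in> {1..4}" using assms by (auto simp: F_carrier)
  show ?thesis
    by (rule group.inv_equality[OF F_group F_linv[OF a] assms]) (use a a3_range in \<open>auto simp: F_carrier\<close>)
qed


lemma fst_comm_aux: assumes "(a::int) \<in> {1..4}" "a' \<in> {1..4}" shows
  "((((a * a') mod 5 * ((a * a * a) mod 5)) mod 5) * ((a' * a' * a') mod 5)) mod 5 = 1"
  using int4_cases[OF assms(1)] int4_cases[OF assms(2)] by auto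

lemma conj_aux: "((a::int) * d + (b + (- d) mod 5) mod 5) mod 5 = (b + (a - 1) * d) mod 5"
proof -
  have "((a::int) * d + (b + (- d) mod 5) mod 5) mod 5 = (a * d + (b + (- d) mod 5)) mod 5"
    by (rule mod_add_right_eq)
  also have "\<dots> = ((a * d + b) + (- d) mod 5) mod 5" by (simp only: add.assoc)
  also have "\<dots> = ((a * d + b) + (- d)) mod 5" by (rule mod_add_right_eq)
  also have "(a * d + b) + (- d) = b + (a - 1) * d" by (simp add: algebra_simps)
  finally show ?thesis .
qed

lemma P_main:
  assumes gFC: "group FC" and subH: "subgroup H FC" and cH: "card H = 16"
  shows "(\<forall>x\<in>H. \<forall>y\<in>H. x \<otimes>\<^bsub>FC\<^esub> y = y \<otimes>\<^bsub>FC\<^esub> x) \<and>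
    (\<forall>p\<in>carrier FC. (\<forall>q\<in>carrier FC. inv\<^bsub>FC\<^esub> q \<otimes>\<^bsub>FC\<^esub> p \<otimes>\<^bsub>FC\<^esub> q \<in> H) \<longleftrightarrow> fst p = (1,0))"
proof -
  interpret FCg: group FC by (rule gFC)
  interpret Fg: group Frob20 by (rule F_group)
  have Hsub: "H \<subseteq> carrier FC" using subgroup.subset[OF subH] .
  have finH: "finite H" using cH by (metis card.infinite zero_neq_numeral)
  have gH: "group (FC\<lparr>carrier := H\<rparr>)" by (rule subgroup.subgroup_is_group[OF subH gFC])
  have pow16: "x [^]\<^bsub>FC\<^esub> (16::nat) = \<one>\<^bsub>FC\<^esub>" if "x \<in> H" for x
  proof -
    have "x [^]\<^bsub>FC\<lparr>carrier := H\<rparr>\<^esub> order (FC\<lparr>carrier := H\<rparr>) = \<one>\<^bsub>FC\<lparr>carrier := H\<rparr>\<^esub>"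
      using group.pow_order_eq_1[OF gH] that by simp
    then show ?thesis using cH FCg.nat_pow_consistent[of x 16 H] by (simp add: order_def)
  qed
  have KS: "fst x \<in> S" if "x \<in> H" for x
  proof (rule pow16_S)
    show "fst x \<in> carrier Frob20" using that Hsub by auto
    have "fst (x [^]\<^bsub>FC\<^esub> (16::nat)) = fst x [^]\<^bsub>Frob20\<^esub> (16::nat)" by (rule FC_pow_fst)
    then show "fst x [^]\<^bsub>Frob20\<^esub> (16::nat) = (1,0)" using pow16[OF that] by (simp add: F_one)
  qed
  define K where "K = fst ` H"
  have finK: "finite K" using finH K_def by simp
  have KF: "K \<subseteq> carrier Frob20" using Hsub K_def by auto
  have KSS: "K \<subseteq> S" using KS K_def by auto
  have Kcl: "k \<otimes>\<^bsub>Frob20\<^esub> k' \<in> K" if kk: "k \<in> K" "k' \<in> K" for k k'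
  proof -
    obtain x where x: "x \<in> H" "k = fst x" using kk(1) unfolding K_def by blast
    obtain y where y: "y \<in> H" "k' = fst y" using kk(2) unfolding K_def by blast
    note xy = x(1) y(1) x(2) y(2)
    have "x \<otimes>\<^bsub>FC\<^esub> y \<in> H" using subgroup.m_closed[OF subH xy(1,2)] .
    then show ?thesis using xy K_def by (force simp: mult_DirProd')
  qed
  have Kinv: "inv\<^bsub>Frob20\<^esub> k \<in> K" if kk: "k \<in> K" for k
  proof -
    obtain x where x: "x \<in> H" "k = fst x" using kk unfolding K_def by blast
    have xc: "x \<in> carrier FC" using x Hsub by auto
    have ix: "inv\<^bsub>FC\<^esub> x \<in> H" using subgroup.m_inv_closed[OF subH x(1)] .
    have "fst (inv\<^bsub>FC\<^esub> x) \<otimes>\<^bsub>Frob20\<^esub> fst x = fst (inv\<^bsub>FC\<^esub> x \<otimes>\<^bsub>FC\<^esub> x)" by (simp add: mult_DirProd')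
    also have "\<dots> = \<one>\<^bsub>Frob20\<^esub>" using xc by simp
    finally have "inv\<^bsub>Frob20\<^esub> (fst x) = fst (inv\<^bsub>FC\<^esub> x)"
      by (rule Fg.inv_equality) (use xc ix Hsub in auto)
    then show ?thesis using ix x K_def by auto
  qed
  have K1: "(1,0) \<in> K" using subgroup.one_closed[OF subH] K_def by (force simp: F_one)
  have Kcomm: "k \<otimes>\<^bsub>Frob20\<^esub> k' = k' \<otimes>\<^bsub>Frob20\<^esub> k" if "k \<in> K" "k' \<in> K" for k k'
  proof -
    have kc: "k \<in> carrier Frob20" "k' \<in> carrier Frob20" using that KF by auto
    define c where "c = k \<otimes>\<^bsub>Frob20\<^esub> k' \<otimes>\<^bsub>Frob20\<^esub> inv\<^bsub>Frob20\<^esub> k \<otimes>\<^bsub>Frob20\<^esub> inv\<^bsub>Frob20\<^esub> k'"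
    have cK: "c \<in> K" unfolding c_def using that Kcl Kinv by auto
    obtain a b a' b' where ab: "k = (a,b)" "k' = (a',b')" "a \<in> {1..4}" "a' \<in> {1..4}"
      using kc by (auto simp: F_carrier)
    have "fst c = 1" unfolding c_def using ab kc
      by (simp add: F_inv F_mult fst_comm_aux)
    then have "c = \<one>\<^bsub>Frob20\<^esub>" using cK KSS by (auto simp: S_def F_one)
    then have "k \<otimes>\<^bsub>Frob20\<^esub> k' \<otimes>\<^bsub>Frob20\<^esub> inv\<^bsub>Frob20\<^esub> k \<otimes>\<^bsub>Frob20\<^esub> inv\<^bsub>Frob20\<^esub> k' \<otimes>\<^bsub>Frob20\<^esub> (k' \<otimes>\<^bsub>Frob20\<^esub> k)
       = k' \<otimes>\<^bsub>Frob20\<^esub> k" using kc unfolding c_def by simp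
    moreover have "inv\<^bsub>Frob20\<^esub> k' \<otimes>\<^bsub>Frob20\<^esub> (k' \<otimes>\<^bsub>Frob20\<^esub> k) = k"
      using kc by (simp add: Fg.m_assoc[symmetric])
    ultimately show ?thesis using kc by (simp add: Fg.m_assoc)
  qed
  have HK: "H \<subseteq> K \<times> {0..3}"
  proof
    fix x assume xH: "x \<in> H"
    have "snd x \<in> carrier C4" using xH Hsub by (auto simp: mem_Times_iff)
    then have "snd x \<in> {0..3}" by (simp add: carrier_integer_mod_group)
    moreover have "fst x \<in> K" using xH K_def by simp
    ultimately show "x \<in> K \<times> {0..3}" by (simp add: mem_Times_iff)
  qed
  have "16 \<le> card (K \<times> {0..3::int})" using card_mono[OF _ HK] finK cH by simp
  then have cK4: "4 \<le> card K" by (simp add: card_cartesian_product)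
  obtain k0 where k0: "k0 \<in> K" "k0 \<noteq> (1,0)"
  proof -
    have "\<not> K \<subseteq> {(1,0)}" using cK4 card_mono[of "{(1,0)}" K] by auto
    then show ?thesis using that by auto
  qed
  obtain a0 b0 where ab0: "k0 = (a0,b0)" "a0 \<in> {2..4}" using k0 KSS by (auto simp: S_def)
  have injK: "inj_on fst K"
  proof (rule inj_onI)
    fix k1 k2 assume k12: "k1 \<in> K" "k2 \<in> K" "fst k1 = fst k2"
    obtain a1 b1 b2 where e: "k1 = (a1,b1)" "k2 = (a1,b2)" "b1 \<in> {0..4}" "b2 \<in> {0..4}"
      using k12 KF by (cases k1; cases k2) (auto simp: F_carrier)
    have c1: "k0 \<otimes>\<^bsub>Frob20\<^esub> k1 = k1 \<otimes>\<^bsub>Frob20\<^esub> k0" using Kcomm k0(1) k12(1) by blast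
    have c2: "k0 \<otimes>\<^bsub>Frob20\<^esub> k2 = k2 \<otimes>\<^bsub>Frob20\<^esub> k0" using Kcomm k0(1) k12(2) by blast
    have "b1 = b2"
      by (rule L2[of a0 b1 b2 b0 a1, OF ab0(2) e(3) e(4)]) (use c1 c2 e ab0 in \<open>simp_all add: F_mult\<close>)
    then show "k1 = k2" using e by simp
  qed
  have "card K = card (fst ` K)" using injK by (simp add: card_image)
  also have "\<dots> \<le> card {1..4::int}" by (rule card_mono) (use KF in \<open>auto simp: F_carrier\<close>)
  finally have cK: "card K = 4" using cK4 by simp
  have HKeq: "H = K \<times> {0..3}"
    by (rule card_subset_eq) (use finK HK cH cK in \<open>auto simp: card_cartesian_product\<close>)
  have ab: "\<forall>x\<in>H. \<forall>y\<in>H. x \<otimes>\<^bsub>FC\<^esub> y = y \<otimes>\<^bsub>FC\<^esub> x"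
  proof (intro ballI)
    fix x y assume xy: "x \<in> H" "y \<in> H"
    have "fst x \<otimes>\<^bsub>Frob20\<^esub> fst y = fst y \<otimes>\<^bsub>Frob20\<^esub> fst x" using Kcomm xy K_def by auto
    then show "x \<otimes>\<^bsub>FC\<^esub> y = y \<otimes>\<^bsub>FC\<^esub> x" by (simp add: FC_mult' add.commute)
  qed
  have core: "(\<forall>q\<in>carrier FC. inv\<^bsub>FC\<^esub> q \<otimes>\<^bsub>FC\<^esub> p \<otimes>\<^bsub>FC\<^esub> q \<in> H) \<longleftrightarrow> fst p = (1,0)"
    if pc: "p \<in> carrier FC" for p
  proof
    assume fp: "fst p = (1,0)"
    show "\<forall>q\<in>carrier FC. inv\<^bsub>FC\<^esub> q \<otimes>\<^bsub>FC\<^esub> p \<otimes>\<^bsub>FC\<^esub> q \<in> H"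
    proof
      fix q assume qc: "q \<in> carrier FC"
      have pq: "p \<otimes>\<^bsub>FC\<^esub> q = q \<otimes>\<^bsub>FC\<^esub> p"
        using qc fp by (cases q) (auto simp: FC_mult' F_mult F_carrier add.commute)
      have iq: "inv\<^bsub>FC\<^esub> q \<in> carrier FC" using qc by (rule FCg.inv_closed)
      have "inv\<^bsub>FC\<^esub> q \<otimes>\<^bsub>FC\<^esub> p \<otimes>\<^bsub>FC\<^esub> q = inv\<^bsub>FC\<^esub> q \<otimes>\<^bsub>FC\<^esub> (p \<otimes>\<^bsub>FC\<^esub> q)"
        by (rule FCg.m_assoc[OF iq pc qc])
      also have "\<dots> = inv\<^bsub>FC\<^esub> q \<otimes>\<^bsub>FC\<^esub> (q \<otimes>\<^bsub>FC\<^esub> p)" using pq by simp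
      also have "\<dots> = inv\<^bsub>FC\<^esub> q \<otimes>\<^bsub>FC\<^esub> q \<otimes>\<^bsub>FC\<^esub> p" by (rule FCg.m_assoc[OF iq qc pc, symmetric])
      also have "\<dots> = p" using pc qc by (simp only: FCg.l_inv FCg.l_one)
      also have "p \<in> H" using HKeq K1 fp pc by (cases p) (auto simp: FC_carrier carrier_integer_mod_group)
      finally show "inv\<^bsub>FC\<^esub> q \<otimes>\<^bsub>FC\<^esub> p \<otimes>\<^bsub>FC\<^esub> q \<in> H" .
    qed
  next
    assume all: "\<forall>q\<in>carrier FC. inv\<^bsub>FC\<^esub> q \<otimes>\<^bsub>FC\<^esub> p \<otimes>\<^bsub>FC\<^esub> q \<in> H"
    have e1: "inv\<^bsub>FC\<^esub> \<one>\<^bsub>FC\<^esub> \<otimes>\<^bsub>FC\<^esub> p \<otimes>\<^bsub>FC\<^esub> \<one>\<^bsub>FC\<^esub> = p"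
      using pc by (metis FCg.inv_one FCg.l_one FCg.r_one)
    have "p \<in> H" using all[rule_format, OF FCg.one_closed] unfolding e1 .
    then have fpK: "fst p \<in> K" using K_def by auto
    show "fst p = (1,0)"
    proof (rule ccontr)
      assume ne: "fst p \<noteq> (1,0)"
      obtain a b c where abc: "p = ((a,b),c)" "a \<in> {2..4}" "b \<in> {0..4}" "c \<in> {0..3}"
        using fpK KSS ne pc by (cases p) (auto simp: S_def FC_carrier carrier_integer_mod_group)
      define g where "g = (\<lambda>d::int. (a, (b + (a - 1) * d) mod 5))"
      have gK: "g d \<in> K" if d: "d \<in> {0..4}" for d
      proof -
        define q where "q = (((1::int), d), (0::int))"
        have qc: "q \<in> carrier FC" using d by (simp add: q_def FC_carrier carrier_integer_mod_group F_carrier)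
        have qi: "inv\<^bsub>FC\<^esub> q = ((1, (- d) mod 5), 0)"
        proof (rule FCg.inv_equality)
          show "((1, (- d) mod 5), 0) \<otimes>\<^bsub>FC\<^esub> q = \<one>\<^bsub>FC\<^esub>"
            by (simp add: q_def FC_mult' F_mult F_one mod_add_right_eq)
        qed (use qc in \<open>auto simp: FC_carrier carrier_integer_mod_group F_carrier\<close>)
        have "inv\<^bsub>FC\<^esub> q \<otimes>\<^bsub>FC\<^esub> p \<otimes>\<^bsub>FC\<^esub> q = (g d, c)"
          using abc unfolding qi by (simp add: q_def g_def FC_mult' F_mult conj_aux)
        then have "(g d, c) \<in> H" using all[rule_format, OF qc] by simp
        then show ?thesis using K_def by force
      qed
      have "inj_on g {0..4}"
      proof (rule inj_onI)
        fix x y assume xy: "x \<in> {0..4}" "y \<in> {0..4}" "g x = g y"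
        then have "(b + (a - 1) * x) mod 5 = (b + (a - 1) * y) mod 5" by (simp add: g_def)
        then show "x = y" by (rule inj5[OF abc(2) xy(1) xy(2)])
      qed
      then have "card (g ` {0..4}) = 5" by (simp add: card_image)
      moreover have "card (g ` {0..4}) \<le> card K" using gK finK by (intro card_mono) auto
      ultimately show False using cK by simp
    qed
  qed
  show ?thesis using ab core by blast
qed


lemma (in group) sub_pow: "subgroup H G \<Longrightarrow> x \<in> H \<Longrightarrow> x [^] (n::nat) \<in> H"
  by (induct n) (auto simp: subgroup.one_closed subgroup.m_closed)

lemma (in group) inv_cancel_l: "t \<in> carrier G \<Longrightarrow> y \<in> carrier G \<Longrightarrow> inv t \<otimes> (t \<otimes> y) = y"
  by (simp add: m_assoc[symmetric])

lemma (in group) inv_cancel_l2: "t \<in> carrier G \<Longrightarrow> y \<in> carrier G \<Longrightarrow> t \<otimes> (inv t \<otimes> y) = y"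
  by (simp add: m_assoc[symmetric])

lemma (in group) conj_pow: assumes "a \<in> carrier G" "t \<in> carrier G"
  shows "t \<otimes> a [^] (n::nat) \<otimes> inv t = (t \<otimes> a \<otimes> inv t) [^] n"
proof (induct n)
  case 0 then show ?case using assms by simp
next
  case (Suc n)
  have "t \<otimes> a [^] Suc n \<otimes> inv t = (t \<otimes> a [^] n \<otimes> inv t) \<otimes> (t \<otimes> a \<otimes> inv t)"
    using assms by (simp add: m_assoc inv_cancel_l)
  then show ?case using Suc by simp
qed

lemma (in group) mem_conj: assumes "g \<in> carrier G" "H \<subseteq> carrier G"
  shows "x \<in> (g <# H) #> inv g \<longleftrightarrow> x \<in> carrier G \<and> inv g \<otimes> x \<otimes> g \<in> H"
proof
  assume "x \<in> (g <# H) #> inv g"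
  then obtain h where h: "h \<in> H" "x = g \<otimes> h \<otimes> inv g" by (auto simp: l_coset_def r_coset_def)
  have hc: "h \<in> carrier G" using h assms by auto
  have "inv g \<otimes> x \<otimes> g = h" using h(2) hc assms by (simp add: m_assoc inv_cancel_l)
  then show "x \<in> carrier G \<and> inv g \<otimes> x \<otimes> g \<in> H" using h hc assms by auto
next
  assume a: "x \<in> carrier G \<and> inv g \<otimes> x \<otimes> g \<in> H"
  have "g \<otimes> (inv g \<otimes> x \<otimes> g) \<otimes> inv g = x" using a assms by (simp add: m_assoc inv_cancel_l2)
  then show "x \<in> (g <# H) #> inv g" using a by (force simp: l_coset_def r_coset_def)
qed

lemma (in group) mem_core: assumes "K \<subseteq> carrier G" "H \<subseteq> carrier G" "g0 \<in> K"
  shows "x \<in> core_in G K H \<longleftrightarrow> x \<in> carrier G \<and> (\<forall>g\<in>K. inv g \<otimes> x \<otimes> g \<in> H)"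
  using assms mem_conj by (auto simp: core_in_def) blast+


lemma zpow: "((1::int,0::int),(1::int)) [^]\<^bsub>FC\<^esub> (n::nat) = ((1,0), int n mod 4)"
  by (induct n) (auto simp: FC_mult' F_mult F_one mod_simps add.commute)

lemma card_F: "card (carrier Frob20) = 20"
proof -
  have "carrier Frob20 = {1..4::int} \<times> {0..4::int}" by (auto simp: F_carrier)
  then show ?thesis by (simp add: card_cartesian_product)
qed

lemma card_FC: "card (carrier FC) = 80"
  by (simp add: card_cartesian_product card_F carrier_integer_mod_group)

lemma (in group) pow_mod_k: assumes "x \<in> carrier G" "x [^] (k::nat) = \<one>"
  shows "x [^] (n::nat) = x [^] (n mod k)"
proof -
  have "x [^] n = x [^] (k * (n div k) + n mod k)" by simp
  also have "\<dots> = x [^] (k * (n div k)) \<otimes> x [^] (n mod k)"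
    using assms(1) by (rule nat_pow_mult[symmetric])
  also have "x [^] (k * (n div k)) = (x [^] k) [^] (n div k)"
    using assms(1) by (rule nat_pow_pow[symmetric])
  finally show ?thesis using assms by simp
qed

lemma C_carrier: "carrier C4_wr_C2 = ({0..3} \<times> {0..3}) \<times> {0..1}"
  by (auto simp: C4_wr_C2_def)

lemma C_mult: "((a,b),s) \<otimes>\<^bsub>C4_wr_C2\<^esub> ((c,d),u) =
  ((if s = 0 then ((a + c) mod 4, (b + d) mod 4) else ((a + d) mod 4, (b + c) mod 4)), (s + u) mod 2)"
  by (simp add: C4_wr_C2_def)

lemma C_closed: assumes "x \<in> carrier C4_wr_C2" "y \<in> carrier C4_wr_C2"
  shows "x \<otimes>\<^bsub>C4_wr_C2\<^esub> y \<in> carrier C4_wr_C2"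
proof -
  obtain a b s c d u where xy: "x = ((a,b),s)" "y = ((c,d),u)" by (metis prod.collapse)
  have m4: "(z::int) mod 4 \<le> 3" for z
  proof - have "z mod 4 < 4" by simp then show ?thesis by simp qed
  have m2: "(z::int) mod 2 \<le> 1" for z
  proof - have "z mod 2 < 2" by simp then show ?thesis by simp qed
  show ?thesis using xy by (simp add: C_mult C_carrier m4 m2)
qed

lemma card_C: "card (carrier C4_wr_C2) = 32"
  by (simp add: C_carrier card_cartesian_product)

lemma mod3_aux: "(i + 3 * k) mod 4 = 0 \<Longrightarrow> i mod 4 = (k::nat) mod 4" by presburger

lemma (in group) main_aux:
  assumes sub_x: "subgroup Gx G" and sub_e: "subgroup Ge G"
    and fin_x: "finite Gx" and fin_e: "finite Ge"
    and inter: "Gxy = Gx \<inter> Ge"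
    and idx_x: "card Gx = 5 * card Gxy"
    and idx_e: "card Ge = 2 * card Gxy"
    and t_e: "t \<in> Ge" and t_nxy: "t \<notin> Gxy"
    and kernel_xy: "core_in G Gx Gxy \<inter> ((t <# core_in G Gx Gxy) #> inv t) = {\<one>}"
    and iso_x: "G\<lparr>carrier := Gx\<rparr> \<cong> Frob20 \<times>\<times> C4"
  shows "G\<lparr>carrier := Ge\<rparr> \<cong> C4_wr_C2"
proof -
  have gX: "group (G\<lparr>carrier := Gx\<rparr>)" by (rule subgroup.subgroup_is_group[OF sub_x is_group])
  obtain \<phi> where phi: "\<phi> \<in> iso (G\<lparr>carrier := Gx\<rparr>) FC" using iso_x by (auto simp: is_iso_def)
  have gFC: "group FC" by (rule group.iso_imp_group[OF gX iso_x P_monoid])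
  have phom: "\<phi> \<in> hom (G\<lparr>carrier := Gx\<rparr>) FC" using phi by (simp add: iso_def)
  have pbij: "bij_betw \<phi> Gx (carrier FC)" using phi by (simp add: iso_def)
  have pinj: "inj_on \<phi> Gx" using pbij by (simp add: bij_betw_def)
  have pimg: "\<phi> ` Gx = carrier FC" using pbij by (simp add: bij_betw_def)
  have pmul: "\<phi> (x \<otimes> y) = \<phi> x \<otimes>\<^bsub>FC\<^esub> \<phi> y" if "x \<in> Gx" "y \<in> Gx" for x y
    using phom that by (auto simp: hom_def)
  interpret gh: group_hom "G\<lparr>carrier := Gx\<rparr>" FC \<phi>
    using gX gFC phom by (simp add: group_hom_def group_hom_axioms_def)
  have Gx_c: "Gx \<subseteq> carrier G" by (rule subgroup.subset[OF sub_x])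
  have Ge_c: "Ge \<subseteq> carrier G" by (rule subgroup.subset[OF sub_e])
  have sub_xy: "subgroup Gxy G" unfolding inter by (rule subgroups_Inter_pair[OF sub_x sub_e])
  have xy_x: "Gxy \<subseteq> Gx" "Gxy \<subseteq> Ge" using inter by auto
  have xy_c: "Gxy \<subseteq> carrier G" using xy_x Gx_c by auto
  have sub_xy_x: "subgroup Gxy (G\<lparr>carrier := Gx\<rparr>)" by (rule subgroup_incl[OF sub_xy sub_x xy_x(1)])
  have cGx: "card Gx = 80" using card_FC pbij by (metis bij_betw_same_card)
  have cGxy: "card Gxy = 16" using cGx idx_x by simp
  have cGe: "card Ge = 32" using cGxy idx_e by simp
  have finxy: "finite Gxy" using fin_x xy_x finite_subset by blast
  define H where "H = \<phi> ` Gxy"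
  have subH: "subgroup H FC" unfolding H_def by (rule gh.subgroup_img_is_subgroup[OF sub_xy_x])
  have cH: "card H = 16" unfolding H_def using cGxy inj_on_subset[OF pinj xy_x(1)] by (simp add: card_image)
  have PM: "(\<forall>x\<in>H. \<forall>y\<in>H. x \<otimes>\<^bsub>FC\<^esub> y = y \<otimes>\<^bsub>FC\<^esub> x) \<and>
    (\<forall>p\<in>carrier FC. (\<forall>q\<in>carrier FC. inv\<^bsub>FC\<^esub> q \<otimes>\<^bsub>FC\<^esub> p \<otimes>\<^bsub>FC\<^esub> q \<in> H) \<longleftrightarrow> fst p = (1,0))"
    by (rule P_main[OF gFC subH cH])
  have xy_ab: "x \<otimes> y = y \<otimes> x" if "x \<in> Gxy" "y \<in> Gxy" for x y
  proof -
    have xg: "x \<in> Gx" "y \<in> Gx" using that xy_x by auto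
    have PM1: "\<forall>x\<in>H. \<forall>y\<in>H. x \<otimes>\<^bsub>FC\<^esub> y = y \<otimes>\<^bsub>FC\<^esub> x" using PM by blast
    have "\<phi> (x \<otimes> y) = \<phi> x \<otimes>\<^bsub>FC\<^esub> \<phi> y" using pmul xg by blast
    also have "\<dots> = \<phi> y \<otimes>\<^bsub>FC\<^esub> \<phi> x" using PM1 that unfolding H_def by blast
    also have "\<dots> = \<phi> (y \<otimes> x)" using pmul xg by metis
    finally have "\<phi> (x \<otimes> y) = \<phi> (y \<otimes> x)" .
    then show ?thesis using pinj that xy_x subgroup.m_closed[OF sub_xy] by (meson inj_onD subsetD)
  qed
  have inHiff: "\<phi> y \<in> H \<longleftrightarrow> y \<in> Gxy" if "y \<in> Gx" for y
    unfolding H_def using pinj that xy_x by (auto dest: inj_onD)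
  define A where "A = core_in G Gx Gxy"
  have memA: "x \<in> A \<longleftrightarrow> x \<in> Gx \<and> fst (\<phi> x) = (1,0)" for x
  proof -
    have one_x: "\<one> \<in> Gx" by (rule subgroup.one_closed[OF sub_x])
    have "x \<in> A \<longleftrightarrow> x \<in> carrier G \<and> (\<forall>g\<in>Gx. inv g \<otimes> x \<otimes> g \<in> Gxy)"
      unfolding A_def by (rule mem_core[OF Gx_c xy_c one_x])
    also have "\<dots> \<longleftrightarrow> x \<in> Gx \<and> (\<forall>g\<in>Gx. inv g \<otimes> x \<otimes> g \<in> Gxy)"
    proof -
      have "inv \<one> \<otimes> x \<otimes> \<one> = x" if "x \<in> carrier G" using that by simp
      then show ?thesis using one_x xy_x Gx_c by auto
    qed
    also have "\<dots> \<longleftrightarrow> x \<in> Gx \<and> (\<forall>q\<in>carrier FC. inv\<^bsub>FC\<^esub> q \<otimes>\<^bsub>FC\<^esub> \<phi> x \<otimes>\<^bsub>FC\<^esub> q \<in> H)"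
    proof (cases "x \<in> Gx")
      case True
      have "\<phi> (inv g \<otimes> x \<otimes> g) = inv\<^bsub>FC\<^esub> (\<phi> g) \<otimes>\<^bsub>FC\<^esub> \<phi> x \<otimes>\<^bsub>FC\<^esub> \<phi> g" if g: "g \<in> Gx" for g
      proof -
        have ig: "inv g \<in> Gx" by (rule subgroup.m_inv_closed[OF sub_x g])
        have "\<phi> (inv g) = inv\<^bsub>FC\<^esub> (\<phi> g)"
          using gh.hom_inv[of g] g m_inv_consistent[OF sub_x g] by simp
        then show ?thesis using pmul ig g True subgroup.m_closed[OF sub_x] by simp
      qed
      moreover have "inv g \<otimes> x \<otimes> g \<in> Gx" if "g \<in> Gx" for g
        using that True sub_x by (simp add: subgroup.m_closed subgroup.m_inv_closed)
      ultimately have eqv: "(inv g \<otimes> x \<otimes> g \<in> Gxy) \<longleftrightarrow> (inv\<^bsub>FC\<^esub> (\<phi> g) \<otimes>\<^bsub>FC\<^esub> \<phi> x \<otimes>\<^bsub>FC\<^esub> \<phi> g \<in> H)"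
        if "g \<in> Gx" for g
        using inHiff[of "inv g \<otimes> x \<otimes> g"] that by metis
      have "(\<forall>g\<in>Gx. inv g \<otimes> x \<otimes> g \<in> Gxy) \<longleftrightarrow> (\<forall>g\<in>Gx. inv\<^bsub>FC\<^esub> (\<phi> g) \<otimes>\<^bsub>FC\<^esub> \<phi> x \<otimes>\<^bsub>FC\<^esub> \<phi> g \<in> H)"
        using eqv by blast
      also have "\<dots> \<longleftrightarrow> (\<forall>q\<in>carrier FC. inv\<^bsub>FC\<^esub> q \<otimes>\<^bsub>FC\<^esub> \<phi> x \<otimes>\<^bsub>FC\<^esub> q \<in> H)"
        unfolding pimg[symmetric] by blast
      finally show ?thesis by simp
    qed simp
    also have "\<dots> \<longleftrightarrow> x \<in> Gx \<and> fst (\<phi> x) = (1,0)"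
    proof (cases "x \<in> Gx")
      case True
      then have "\<phi> x \<in> carrier FC" using pimg by blast
      then show ?thesis using PM True by blast
    qed simp
    finally show ?thesis .
  qed
  have A_sub: "A \<subseteq> Gxy"
  proof
    fix x assume "x \<in> A"
    then have "x \<in> carrier G \<and> (\<forall>g\<in>Gx. inv g \<otimes> x \<otimes> g \<in> Gxy)"
      unfolding A_def using mem_core[OF Gx_c xy_c subgroup.one_closed[OF sub_x]] by blast
    then show "x \<in> Gxy" using subgroup.one_closed[OF sub_x] by force
  qed
  have A_c: "A \<subseteq> carrier G" using A_sub xy_c by auto
  define z where "z = (((1::int),(0::int)),(1::int))"
  have zc: "z \<in> carrier FC" by (simp add: z_def F_carrier carrier_integer_mod_group)
  obtain \<alpha> where al: "\<alpha> \<in> Gx" "\<phi> \<alpha> = z" using zc pimg by (metis imageE)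
  have alc: "\<alpha> \<in> carrier G" using al Gx_c by auto
  have phipow: "\<phi> (x [^] (n::nat)) = \<phi> x [^]\<^bsub>FC\<^esub> n" if "x \<in> Gx" for x n
    using gh.hom_nat_pow[of x n] that nat_pow_consistent[of x n Gx] by simp
  have alpx: "\<alpha> [^] (n::nat) \<in> Gx" for n by (rule sub_pow[OF sub_x al(1)])
  have phial: "\<phi> (\<alpha> [^] (n::nat)) = ((1,0), int n mod 4)" for n
    using phipow[OF al(1)] al(2) zpow z_def by simp
  have alA: "\<alpha> [^] (n::nat) \<in> A" for n using memA alpx phial by simp
  have alxy: "\<alpha> [^] (n::nat) \<in> Gxy" for n using alA A_sub by auto
  have phione: "\<phi> \<one> = ((1,0),0)" using gh.hom_one by (simp add: F_one)
  have one_x: "\<one> \<in> Gx" by (rule subgroup.one_closed[OF sub_x])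
  have al_one: "\<alpha> [^] (n::nat) = \<one> \<longleftrightarrow> int n mod 4 = 0" for n
  proof
    assume "\<alpha> [^] n = \<one>" then show "int n mod 4 = 0" using phial[of n] phione by simp
  next
    assume "int n mod 4 = 0"
    then have "\<phi> (\<alpha> [^] n) = \<phi> \<one>" using phial[of n] phione by simp
    then show "\<alpha> [^] n = \<one>" using pinj alpx one_x by (meson inj_onD)
  qed
  have Aal: "\<exists>n<4. x = \<alpha> [^] (n::nat)" if xA: "x \<in> A" for x
  proof -
    have xg: "x \<in> Gx" and fx: "fst (\<phi> x) = (1,0)" using memA xA by auto
    have "\<phi> x \<in> carrier FC" using xg pimg by blast
    then have sx: "snd (\<phi> x) \<in> {0..<4}" by (auto simp: carrier_integer_mod_group)
    define c where "c = snd (\<phi> x)"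
    have "\<phi> x = ((1,0), c)" using fx c_def by (metis prod.collapse)
    also have "\<dots> = \<phi> (\<alpha> [^] nat c)" using phial[of "nat c"] sx c_def by simp
    finally have "x = \<alpha> [^] nat c" using pinj xg alpx by (meson inj_onD)
    moreover have "nat c < 4" using sx c_def by auto
    ultimately show ?thesis by blast
  qed
  have tc: "t \<in> carrier G" using t_e Ge_c by auto
  have finGe: "finite Ge" by (rule fin_e)
  have coset: "inv t \<otimes> g \<in> Gxy" if g: "g \<in> Ge" "g \<notin> Gxy" for g
  proof -
    define T where "T = (\<lambda>h. t \<otimes> h) ` Gxy"
    have TGe: "T \<subseteq> Ge"
    proof
      fix y assume "y \<in> T"
      then obtain h where h: "h \<in> Gxy" "y = t \<otimes> h" unfolding T_def by blast
      have "h \<in> Ge" using h xy_x by blast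
      then show "y \<in> Ge" using h subgroup.m_closed[OF sub_e t_e] by simp
    qed
    have Tdis: "T \<inter> Gxy = {}"
    proof (rule ccontr)
      assume "T \<inter> Gxy \<noteq> {}"
      then obtain h where h: "h \<in> Gxy" "t \<otimes> h \<in> Gxy" unfolding T_def by auto
      have hc: "h \<in> carrier G" using h xy_c by auto
      have "(t \<otimes> h) \<otimes> inv h = t" using hc tc by (simp add: m_assoc)
      moreover have "(t \<otimes> h) \<otimes> inv h \<in> Gxy"
        using h by (simp add: subgroup.m_closed[OF sub_xy] subgroup.m_inv_closed[OF sub_xy])
      ultimately show False using t_nxy by simp
    qed
    have "inj_on (\<lambda>h. t \<otimes> h) Gxy"
    proof (rule inj_onI)
      fix h h' assume hh: "h \<in> Gxy" "h' \<in> Gxy" "t \<otimes> h = t \<otimes> h'"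
      have hc: "h \<in> carrier G" "h' \<in> carrier G" using hh xy_c by blast+
      show "h = h'" by (rule l_cancel[OF hh(3) hc tc])
    qed
    then have cT: "card T = 16" unfolding T_def using cGxy by (simp add: card_image)
    have "card (Gxy \<union> T) = 32"
    proof -
      have "finite T" using finite_subset[OF TGe finGe] .
      moreover have "Gxy \<inter> T = {}" using Tdis by blast
      ultimately have "card (Gxy \<union> T) = card Gxy + card T" using card_Un_disjoint[OF finxy] by blast
      then show ?thesis using cT cGxy by simp
    qed
    then have "Gxy \<union> T = Ge"
    proof -
      have "Gxy \<union> T \<subseteq> Ge" using TGe xy_x by blast
      moreover note c32 = \<open>card (Gxy \<union> T) = 32\<close>
      ultimately show ?thesis using card_subset_eq[OF finGe] cGe by metis
    qed
    then have "g \<in> T" using g by auto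
    then obtain h where h: "h \<in> Gxy" "g = t \<otimes> h" unfolding T_def by auto
    have "h \<in> carrier G" using h xy_c by blast
    then have "inv t \<otimes> g = h" using h(2) inv_cancel_l[OF tc] by simp
    then show ?thesis using h(1) by simp
  qed
  have tt: "t \<otimes> t \<in> Gxy"
  proof (rule ccontr)
    assume "t \<otimes> t \<notin> Gxy"
    moreover have "t \<otimes> t \<in> Ge" using t_e subgroup.m_closed[OF sub_e] by blast
    ultimately have "inv t \<otimes> (t \<otimes> t) \<in> Gxy" using coset by blast
    then show False using t_nxy tc by (simp add: inv_cancel_l)
  qed
  have norm: "t \<otimes> h \<otimes> inv t \<in> Gxy" if h: "h \<in> Gxy" for h
  proof (rule ccontr)
    assume a: "t \<otimes> h \<otimes> inv t \<notin> Gxy"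
    have "t \<otimes> h \<otimes> inv t \<in> Ge" using h xy_x t_e
      by (simp add: subgroup.m_closed[OF sub_e] subgroup.m_inv_closed[OF sub_e] subsetD)
    then have "inv t \<otimes> (t \<otimes> h \<otimes> inv t) \<in> Gxy" using coset a by blast
    moreover have hc: "h \<in> carrier G" using h xy_c by blast
    moreover have "inv t \<otimes> (t \<otimes> h \<otimes> inv t) = h \<otimes> inv t" using hc tc by (simp add: m_assoc inv_cancel_l)
    ultimately have "h \<otimes> inv t \<in> Gxy" by simp
    then have "inv h \<otimes> (h \<otimes> inv t) \<in> Gxy" using h
      by (simp add: subgroup.m_closed[OF sub_xy] subgroup.m_inv_closed[OF sub_xy])
    moreover have "inv h \<otimes> (h \<otimes> inv t) = inv t" using hc tc by (simp add: inv_cancel_l)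
    ultimately have "inv t \<in> Gxy" by simp
    then have "inv (inv t) \<in> Gxy" by (rule subgroup.m_inv_closed[OF sub_xy])
    then show False using t_nxy tc by simp
  qed
  define \<beta> where "\<beta> = t \<otimes> \<alpha> \<otimes> inv t"
  have bec: "\<beta> \<in> carrier G" using tc alc \<beta>_def by simp
  have bepow: "\<beta> [^] (n::nat) = t \<otimes> \<alpha> [^] n \<otimes> inv t" for n
    unfolding \<beta>_def by (rule conj_pow[OF alc tc, symmetric])
  have bexy: "\<beta> [^] (n::nat) \<in> Gxy" for n using bepow norm alxy by simp
  have beB: "\<beta> [^] (n::nat) \<in> (t <# A) #> inv t" for n
  proof -
    have "inv t \<otimes> (t \<otimes> \<alpha> [^] n \<otimes> inv t) \<otimes> t = \<alpha> [^] n"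
      using tc alc by (simp add: m_assoc inv_cancel_l)
    then show ?thesis using mem_conj[OF tc A_c] bepow alA tc alc by simp
  qed
  have AB: "\<alpha> [^] (i::nat) = \<one>" if "\<alpha> [^] i = \<beta> [^] (j::nat)" for i j
  proof -
    have "\<alpha> [^] i \<in> A" by (rule alA)
    moreover have "\<alpha> [^] i \<in> (t <# A) #> inv t" unfolding that by (rule beB)
    ultimately have "\<alpha> [^] i \<in> A \<inter> ((t <# A) #> inv t)" by blast
    then show ?thesis using kernel_xy unfolding A_def[symmetric] by simp
  qed
  have al4: "\<alpha> [^] (4::nat) = \<one>" using al_one by simp
  have be_one: "\<beta> [^] (j::nat) = \<one> \<longleftrightarrow> int j mod 4 = 0" for j
  proof -
    have "\<alpha> [^] j = inv t \<otimes> (t \<otimes> \<alpha> [^] j \<otimes> inv t) \<otimes> t" using tc alc by (simp add: m_assoc inv_cancel_l)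
    then have "\<beta> [^] j = \<one> \<longleftrightarrow> \<alpha> [^] j = \<one>" using bepow tc by auto
    then show ?thesis using al_one by simp
  qed
  have be4: "\<beta> [^] (4::nat) = \<one>" using be_one by simp
  have alxy1: "\<alpha> \<in> Gxy" using alxy[of 1] alc by simp
  define E where "E = (\<lambda>(i::nat) (j::nat). \<alpha> [^] i \<otimes> \<beta> [^] j)"
  have Ec: "E i j \<in> carrier G" for i j unfolding E_def using alc bec by simp
  have Exy: "E i j \<in> Gxy" for i j unfolding E_def using alxy bexy subgroup.m_closed[OF sub_xy] by blast
  have Emul: "E i j \<otimes> E k l = E (i+k) (j+l)" for i j k l
  proof -
    have c: "\<beta> [^] j \<otimes> \<alpha> [^] k = \<alpha> [^] k \<otimes> \<beta> [^] j" using xy_ab alxy bexy by blast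
    have "E i j \<otimes> E k l = \<alpha> [^] i \<otimes> (\<beta> [^] j \<otimes> \<alpha> [^] k) \<otimes> \<beta> [^] l"
      unfolding E_def using alc bec by (simp add: m_assoc)
    also have "\<dots> = \<alpha> [^] i \<otimes> (\<alpha> [^] k \<otimes> \<beta> [^] j) \<otimes> \<beta> [^] l" using c by simp
    also have "\<dots> = (\<alpha> [^] i \<otimes> \<alpha> [^] k) \<otimes> (\<beta> [^] j \<otimes> \<beta> [^] l)" using alc bec by (simp add: m_assoc)
    also have "\<dots> = E (i+k) (j+l)" unfolding E_def using alc bec by (simp add: nat_pow_mult)
    finally show ?thesis .
  qed
  have Emod: "E i j = E (i mod 4) (j mod 4)" for i j
    unfolding E_def using pow_mod_k[OF alc al4, of i] pow_mod_k[OF bec be4, of j] by simp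
  have E00: "E 0 0 = \<one>" unfolding E_def by simp
  have Eone: "i mod 4 = 0 \<and> j mod 4 = 0" if e: "E i j = \<one>" for i j
  proof -
    have b4: "\<beta> [^] j \<otimes> \<beta> [^] (3*j) = \<one>"
    proof -
      have "\<beta> [^] j \<otimes> \<beta> [^] (3*j) = \<beta> [^] (j + 3*j)" using bec by (simp add: nat_pow_mult)
      also have "j + 3 * j = 4 * j" by simp
      also have "\<beta> [^] (4*j) = (\<beta> [^] (4::nat)) [^] j" using bec by (simp add: nat_pow_pow)
      finally show ?thesis using be4 by simp
    qed
    have "\<alpha> [^] i = \<alpha> [^] i \<otimes> (\<beta> [^] j \<otimes> \<beta> [^] (3*j))" using b4 alc by simp
    also have "\<dots> = E i j \<otimes> \<beta> [^] (3*j)" unfolding E_def using alc bec by (simp add: m_assoc)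
    also have "\<dots> = \<beta> [^] (3*j)" using e bec by simp
    finally have a1: "\<alpha> [^] i = \<one>" by (rule AB)
    then have i0: "int i mod 4 = 0" using al_one by simp
    have "\<beta> [^] j = \<one>" using e a1 bec unfolding E_def by simp
    then have "int j mod 4 = 0" using be_one by simp
    then show ?thesis using i0 by presburger
  qed
  have Einj: "i mod 4 = k mod 4 \<and> j mod 4 = l mod 4" if e: "E i j = E k l" for i j k l
  proof -
    have "E (i + 3*k) (j + 3*l) = E i j \<otimes> E (3*k) (3*l)" by (simp add: Emul)
    also have "\<dots> = E k l \<otimes> E (3*k) (3*l)" using e by simp
    also have "\<dots> = E (k + 3*k) (l + 3*l)" by (simp add: Emul)
    also have "\<dots> = E ((k + 3*k) mod 4) ((l + 3*l) mod 4)" by (rule Emod)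
    also have "(k + 3*k) mod 4 = 0" by simp
    also have "(l + 3*l) mod 4 = 0" by simp
    finally have "E (i + 3*k) (j + 3*l) = \<one>" using E00 by simp
    then have "(i + 3*k) mod 4 = 0 \<and> (j + 3*l) mod 4 = 0" by (rule Eone)
    then show ?thesis using mod3_aux[of i k] mod3_aux[of j l] by simp
  qed
  have Esurj: "\<exists>i<4. \<exists>j<4. g = E i j" if g: "g \<in> Gxy" for g
  proof -
    define I where "I = {0..<4::nat} \<times> {0..<4::nat}"
    have inj: "inj_on (\<lambda>(i,j). E i j) I"
    proof (rule inj_onI)
      fix p q assume pq: "p \<in> I" "q \<in> I" "(\<lambda>(i,j). E i j) p = (\<lambda>(i,j). E i j) q"
      obtain a b c d where abcd: "p = (a,b)" "q = (c,d)" "a < 4" "b < 4" "c < 4" "d < 4"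
        using pq(1,2) by (auto simp: I_def)
      then have "E a b = E c d" using pq(3) by simp
      then have "a mod 4 = c mod 4 \<and> b mod 4 = d mod 4" by (rule Einj)
      then show "p = q" using abcd by simp
    qed
    have "card ((\<lambda>(i,j). E i j) ` I) = 16" using inj by (simp add: card_image I_def card_cartesian_product)
    moreover have "(\<lambda>(i,j). E i j) ` I \<subseteq> Gxy" using Exy by auto
    ultimately have "(\<lambda>(i,j). E i j) ` I = Gxy" using card_subset_eq[OF finxy] cGxy by metis
    then have "g \<in> (\<lambda>(i,j). E i j) ` I" using g by simp
    then obtain p where p: "p \<in> I" "g = (\<lambda>(i,j). E i j) p" by blast
    obtain a b where "p = (a,b)" by (cases p)
    then have "a < 4" "b < 4" "g = E a b" using p unfolding I_def by auto
    then show ?thesis by blast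
  qed
  have conj_mul: "t \<otimes> (x \<otimes> y) \<otimes> inv t = (t \<otimes> x \<otimes> inv t) \<otimes> (t \<otimes> y \<otimes> inv t)"
    if "x \<in> carrier G" "y \<in> carrier G" for x y
    using that tc by (simp add: m_assoc inv_cancel_l)
  have tb: "t \<otimes> \<beta> \<otimes> inv t = \<alpha>"
  proof -
    have c: "(t \<otimes> t) \<otimes> \<alpha> = \<alpha> \<otimes> (t \<otimes> t)" using xy_ab tt alxy1 by blast
    have "t \<otimes> \<beta> \<otimes> inv t = (t \<otimes> t) \<otimes> \<alpha> \<otimes> (inv t \<otimes> inv t)" unfolding \<beta>_def using tc alc by (simp add: m_assoc)
    also have "\<dots> = \<alpha> \<otimes> (t \<otimes> t) \<otimes> (inv t \<otimes> inv t)" using c by simp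
    also have "\<dots> = \<alpha>" using tc alc by (simp add: m_assoc inv_cancel_l2)
    finally show ?thesis .
  qed
  have tE: "t \<otimes> E i j \<otimes> inv t = E j i" for i j
  proof -
    have "t \<otimes> E i j \<otimes> inv t = (t \<otimes> \<alpha> [^] i \<otimes> inv t) \<otimes> (t \<otimes> \<beta> [^] j \<otimes> inv t)"
      unfolding E_def using conj_mul alc bec by simp
    also have "t \<otimes> \<alpha> [^] i \<otimes> inv t = \<beta> [^] i" using bepow by simp
    also have "t \<otimes> \<beta> [^] j \<otimes> inv t = \<alpha> [^] j" using conj_pow[OF bec tc, of j] tb by simp
    also have "\<beta> [^] i \<otimes> \<alpha> [^] j = E j i" unfolding E_def using xy_ab alxy bexy by blast
    finally show ?thesis .
  qed
  have tE2: "t \<otimes> E i j = E j i \<otimes> t" for i j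
  proof -
    have "E j i \<otimes> t = t \<otimes> E i j \<otimes> inv t \<otimes> t" using tE by simp
    also have "\<dots> = t \<otimes> E i j" using tc Ec by (simp add: m_assoc)
    finally show ?thesis by simp
  qed
  obtain i0 j0 where ij0: "i0 < 4" "j0 < 4" "t \<otimes> t = E i0 j0" using Esurj[OF tt] by blast
  have "E j0 i0 = E i0 j0"
  proof -
    have "E j0 i0 = t \<otimes> (t \<otimes> t) \<otimes> inv t" using tE ij0(3) by simp
    also have "\<dots> = t \<otimes> t" using tc by (simp add: m_assoc)
    finally show ?thesis using ij0(3) by simp
  qed
  then have "j0 mod 4 = i0 mod 4 \<and> i0 mod 4 = j0 mod 4" by (rule Einj)
  then have i0j0: "j0 = i0" using ij0(1,2) by (metis mod_less)
  define m where "m = 4 - i0"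
  define \<sigma> where "\<sigma> = t \<otimes> E m 0"
  have sic: "\<sigma> \<in> carrier G" unfolding \<sigma>_def using tc Ec by simp
  have siGe: "\<sigma> \<in> Ge" unfolding \<sigma>_def using t_e Exy xy_x subgroup.m_closed[OF sub_e] by blast
  have sin: "\<sigma> \<notin> Gxy"
  proof
    assume "\<sigma> \<in> Gxy"
    then have "\<sigma> \<otimes> inv (E m 0) \<in> Gxy" using Exy
      by (simp add: subgroup.m_closed[OF sub_xy] subgroup.m_inv_closed[OF sub_xy])
    moreover have "\<sigma> \<otimes> inv (E m 0) = t" unfolding \<sigma>_def using tc Ec by (simp add: m_assoc)
    ultimately show False using t_nxy by simp
  qed
  have sisi: "\<sigma> \<otimes> \<sigma> = \<one>"
  proof -
    have "\<sigma> \<otimes> \<sigma> = t \<otimes> (E m 0 \<otimes> t) \<otimes> E m 0" unfolding \<sigma>_def using tc Ec by (simp add: m_assoc)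
    also have "E m 0 \<otimes> t = t \<otimes> E 0 m" using tE2[of 0 m] by simp
    also have "t \<otimes> (t \<otimes> E 0 m) \<otimes> E m 0 = (t \<otimes> t) \<otimes> (E 0 m \<otimes> E m 0)" using tc Ec by (simp add: m_assoc)
    also have "\<dots> = E i0 i0 \<otimes> E m m" using ij0(3) i0j0 Emul[of 0 m m 0] by simp
    also have "\<dots> = E (i0 + m) (i0 + m)" by (simp add: Emul)
    also have "i0 + m = 4" using ij0(1) m_def by simp
    also have "E 4 4 = \<one>" using Emod[of 4 4] E00 by simp
    finally show ?thesis .
  qed
  have siE: "\<sigma> \<otimes> E a b = E b a \<otimes> \<sigma>" for a b
  proof -
    have "\<sigma> \<otimes> E a b = t \<otimes> (E m 0 \<otimes> E a b)" unfolding \<sigma>_def using tc Ec by (simp add: m_assoc)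
    also have "\<dots> = t \<otimes> E (m + a) b" by (simp add: Emul)
    also have "\<dots> = E b (m + a) \<otimes> t" by (rule tE2)
    also have "E b (m + a) = E b a \<otimes> E 0 m" by (simp add: Emul add.commute)
    also have "E b a \<otimes> E 0 m \<otimes> t = E b a \<otimes> (E 0 m \<otimes> t)" using tc Ec by (simp add: m_assoc)
    also have "E 0 m \<otimes> t = \<sigma>" unfolding \<sigma>_def using tE2[of m 0] by simp
    finally show ?thesis .
  qed
  have Emod2: "E (nat ((a + c) mod 4)) (nat ((b + d) mod 4)) = E (nat a + nat c) (nat b + nat d)"
    if "a \<ge> 0" "b \<ge> 0" "c \<ge> 0" "d \<ge> 0" for a b c d :: int
  proof -
    have "nat ((a + c) mod 4) = (nat a + nat c) mod 4" "nat ((b + d) mod 4) = (nat b + nat d) mod 4"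
      using that by (simp_all add: nat_mod_distrib nat_add_distrib)
    then show ?thesis using Emod[of "nat a + nat c" "nat b + nat d"] by simp
  qed
  have sipow: "\<sigma> [^] (n::nat) \<in> Ge" for n by (rule sub_pow[OF sub_e siGe])
  define f where "f = (\<lambda>x::((int\<times>int)\<times>int). E (nat (fst (fst x))) (nat (snd (fst x))) \<otimes> \<sigma> [^] (nat (snd x)))"
  have fGe: "f x \<in> Ge" for x
    unfolding f_def using Exy xy_x sipow subgroup.m_closed[OF sub_e] by blast
  have fhom: "f (x \<otimes>\<^bsub>C4_wr_C2\<^esub> y) = f x \<otimes> f y"
    if xy: "x \<in> carrier C4_wr_C2" "y \<in> carrier C4_wr_C2" for x y
  proof -
    obtain a b s c d u where xyd: "x = ((a,b),s)" "y = ((c,d),u)" by (metis prod.collapse)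
    have r: "a \<in> {0..3}" "b \<in> {0..3}" "s \<in> {0..1}" "c \<in> {0..3}" "d \<in> {0..3}" "u \<in> {0..1}"
      using xy xyd by (auto simp: C_carrier)
    have s01: "s = 0 \<or> s = 1" and u01: "u = 0 \<or> u = 1" using r by auto
    have nn: "a \<ge> 0" "b \<ge> 0" "c \<ge> 0" "d \<ge> 0" using r by auto
    have Ec': "\<And>i j. E i j \<in> carrier G" by (rule Ec)
    show ?thesis
    proof (cases "s = 0")
      case True
      have um: "(s + u) mod 2 = u" using True u01 by auto
      have "f (x \<otimes>\<^bsub>C4_wr_C2\<^esub> y) = E (nat a + nat c) (nat b + nat d) \<otimes> \<sigma> [^] nat u"
        unfolding f_def using xyd True um Emod2[OF nn] by (simp add: C_mult)
      also have "\<dots> = E (nat a) (nat b) \<otimes> E (nat c) (nat d) \<otimes> \<sigma> [^] nat u" by (simp add: Emul)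
      also have "\<dots> = f x \<otimes> f y" unfolding f_def using xyd True sic Ec' by (simp add: m_assoc)
      finally show ?thesis .
    next
      case False
      then have s1: "s = 1" using s01 by simp
      have "f x \<otimes> f y = E (nat a) (nat b) \<otimes> (\<sigma> \<otimes> E (nat c) (nat d)) \<otimes> \<sigma> [^] nat u"
        unfolding f_def using xyd s1 sic Ec' by (simp add: m_assoc)
      also have "\<dots> = E (nat a) (nat b) \<otimes> E (nat d) (nat c) \<otimes> (\<sigma> \<otimes> \<sigma> [^] nat u)"
        using siE sic Ec' by (simp add: m_assoc)
      also have "\<dots> = E (nat a + nat d) (nat b + nat c) \<otimes> (\<sigma> \<otimes> \<sigma> [^] nat u)" by (simp add: Emul)
      finally have fxy: "f x \<otimes> f y = E (nat a + nat d) (nat b + nat c) \<otimes> (\<sigma> \<otimes> \<sigma> [^] nat u)" .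
      have Ex: "f (x \<otimes>\<^bsub>C4_wr_C2\<^esub> y) = E (nat a + nat d) (nat b + nat c) \<otimes> \<sigma> [^] nat ((s + u) mod 2)"
        unfolding f_def using xyd s1 Emod2[of a b d c] nn by (simp add: C_mult)
      show ?thesis
      proof (cases "u = 0")
        case True
        then show ?thesis using Ex fxy s1 sic by simp
      next
        case False
        then have "u = 1" using u01 by simp
        then show ?thesis using Ex fxy s1 sic sisi by simp
      qed
    qed
  qed
  have finj: "inj_on f (carrier C4_wr_C2)"
  proof (rule inj_onI)
    fix x y assume xy: "x \<in> carrier C4_wr_C2" "y \<in> carrier C4_wr_C2" and fe: "f x = f y"
    obtain a b s c d u where xyd: "x = ((a,b),s)" "y = ((c,d),u)" by (metis prod.collapse)
    have r: "a \<in> {0..3}" "b \<in> {0..3}" "s \<in> {0..1}" "c \<in> {0..3}" "d \<in> {0..3}" "u \<in> {0..1}"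
      using xy xyd by (auto simp: C_carrier)
    have s01: "s = 0 \<or> s = 1" and u01: "u = 0 \<or> u = 1" using r by auto
    have fe': "E (nat a) (nat b) \<otimes> \<sigma> [^] nat s = E (nat c) (nat d) \<otimes> \<sigma> [^] nat u"
      using fe xyd unfolding f_def by simp
    have mixed: False if "E i j = E k l \<otimes> \<sigma>" for i j k l
    proof -
      have "inv (E k l) \<otimes> E i j = \<sigma>" using that Ec sic by (simp add: inv_cancel_l)
      moreover have "inv (E k l) \<otimes> E i j \<in> Gxy" using Exy
        by (simp add: subgroup.m_closed[OF sub_xy] subgroup.m_inv_closed[OF sub_xy])
      ultimately show False using sin by simp
    qed
    have su: "s = u"
    proof (rule ccontr)
      assume "s \<noteq> u"
      then have "(s = 0 \<and> u = 1) \<or> (s = 1 \<and> u = 0)" using s01 u01 by auto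
      then show False
      proof
        assume "s = 0 \<and> u = 1"
        then have "E (nat a) (nat b) = E (nat c) (nat d) \<otimes> \<sigma>" using fe' Ec sic by simp
        then show False by (rule mixed)
      next
        assume "s = 1 \<and> u = 0"
        then have "E (nat c) (nat d) = E (nat a) (nat b) \<otimes> \<sigma>" using fe' Ec sic by simp
        then show False by (rule mixed)
      qed
    qed
    have "E (nat a) (nat b) = E (nat c) (nat d)" using fe' su Ec sic by simp
    then have "nat a mod 4 = nat c mod 4 \<and> nat b mod 4 = nat d mod 4" by (rule Einj)
    then have "nat a = nat c" "nat b = nat d" using r by auto
    then have "a = c" "b = d" using r by auto
    then show "x = y" using xyd su by simp
  qed
  have fimg: "f ` carrier C4_wr_C2 = Ge"
  proof -
    have "f ` carrier C4_wr_C2 \<subseteq> Ge" using fGe by auto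
    moreover have "card (f ` carrier C4_wr_C2) = 32" using finj card_C by (simp add: card_image)
    ultimately show ?thesis using card_subset_eq[OF finGe] cGe by metis
  qed
  have fbij: "bij_betw f (carrier C4_wr_C2) Ge" using finj fimg by (simp add: bij_betw_def)
  define g where "g = inv_into (carrier C4_wr_C2) f"
  have gbij: "bij_betw g Ge (carrier C4_wr_C2)" unfolding g_def by (rule bij_betw_inv_into[OF fbij])
  have gc: "g x \<in> carrier C4_wr_C2" if "x \<in> Ge" for x using gbij that by (meson bij_betwE)
  have fg: "f (g x) = x" if "x \<in> Ge" for x unfolding g_def using fimg that by (simp add: f_inv_into_f)
  have ghom: "g \<in> hom (G\<lparr>carrier := Ge\<rparr>) C4_wr_C2"
  proof (rule homI)
    fix x assume "x \<in> carrier (G\<lparr>carrier := Ge\<rparr>)"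
    then show "g x \<in> carrier C4_wr_C2" using gc by simp
  next
    fix x y assume "x \<in> carrier (G\<lparr>carrier := Ge\<rparr>)" "y \<in> carrier (G\<lparr>carrier := Ge\<rparr>)"
    then have xy: "x \<in> Ge" "y \<in> Ge" by simp_all
    have cl: "g x \<otimes>\<^bsub>C4_wr_C2\<^esub> g y \<in> carrier C4_wr_C2" by (rule C_closed[OF gc[OF xy(1)] gc[OF xy(2)]])
    have "f (g x \<otimes>\<^bsub>C4_wr_C2\<^esub> g y) = x \<otimes> y" using fhom[OF gc[OF xy(1)] gc[OF xy(2)]] fg xy by simp
    then have "inv_into (carrier C4_wr_C2) f (x \<otimes> y) = g x \<otimes>\<^bsub>C4_wr_C2\<^esub> g y"
      by (rule inv_into_f_eq[OF finj cl])
    then have "g (x \<otimes> y) = g x \<otimes>\<^bsub>C4_wr_C2\<^esub> g y" unfolding g_def .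
    then show "g (x \<otimes>\<^bsub>G\<lparr>carrier := Ge\<rparr>\<^esub> y) = g x \<otimes>\<^bsub>C4_wr_C2\<^esub> g y" by simp
  qed
  have "g \<in> iso (G\<lparr>carrier := Ge\<rparr>) C4_wr_C2" by (rule isoI[OF ghom]) (simp add: gbij)
  then show ?thesis by (rule is_isoI)
qed

theorem mainTheorem8:
  fixes U :: "('a, 'b) monoid_scheme"
    and Gx Ge Gxy :: "'a set"
    and t :: 'a
  assumes grp: "group U"
    and sub_x: "subgroup Gx U" and sub_e: "subgroup Ge U"
    and fin_x: "finite Gx" and fin_e: "finite Ge"
    and inter: "Gxy = Gx \<inter> Ge"
    and idx_x: "card Gx = 5 * card Gxy"
    and idx_e: "card Ge = 2 * card Gxy"
    and primitive: "\<And>N. N \<subseteq> Gxy \<Longrightarrow> normal N (U\<lparr>carrier := Gx\<rparr>)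
                        \<Longrightarrow> normal N (U\<lparr>carrier := Ge\<rparr>) \<Longrightarrow> N = {\<one>\<^bsub>U\<^esub>}"
    and t_e: "t \<in> Ge" and t_nxy: "t \<notin> Gxy"
    and kernel_xy: "core_in U Gx Gxy \<inter> ((t <#\<^bsub>U\<^esub> core_in U Gx Gxy) #>\<^bsub>U\<^esub> inv\<^bsub>U\<^esub> t)
                      = {\<one>\<^bsub>U\<^esub>}"
    and iso_x: "U\<lparr>carrier := Gx\<rparr> \<cong> Frob20 \<times>\<times> C4"
  shows "U\<lparr>carrier := Ge\<rparr> \<cong> C4_wr_C2"
  by (rule group.main_aux[OF grp sub_x sub_e fin_x fin_e inter idx_x idx_e t_e t_nxy kernel_xy iso_x])

end
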